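(* Let $d\ge 2$, $\varepsilon\in(0,1]$ and $\tau>0$. There is $c=c(\varepsilon,h,\tau)$ such that for all $0<t\le\tau$, $$\int_{\mathbb{R}}\tilde g^{(\varepsilon)}_t(x)\,dx\le c.$$ Moreover, for any $a>0$, $\lim_{t\to0^+}\int_{|x|>a}\tilde g^{(\varepsilon)}_t(x)\,dx=0$.
   Context: Let $\nu$ be a symmetric density of an infinite Lévy measure on $\mathbb{R}$ (with $\int(x^2\wedge1)\nu<\infty$), such that for some $\eta_4>0$, $\nu\in C^1(0,\eta_4)$, $\nu'<0$ and $-\nu'(x)/x$ decreasing on $(0,\eta_4)$. Let $\psi(\xi)=\int(1-\cos(\xi x))\nu(x)dx$ satisfy $\psi(\lambda\theta)\ge\underline{C}\lambda^\alpha\psi(\theta)$ for $\lambda\ge1,\theta\ge0$ and $\psi(\lambda\theta)\le\overline{C}\lambda^\beta\psi(\theta)$ for $\lambda\ge1,\theta\ge1$, with $0<\alpha\le\beta<2$. $h(r)=\int(1\wedge x^2r^{-2})\nu(x)dx$ for $r>0$ (continuous, strictly decreasing from $\infty$ to $0$), $h^{-1}$ its inverse. For $\varepsilon\in(0,1]$, $\tau>0$, $t>0$, $x\in\mathbb{R}$ define $\tilde g^{(\varepsilon)}_t(x)=\frac{1}{h^{-1}(1/t)}\wedge\frac{t\,h(|x|)}{|x|}$ if $|x|<\varepsilon$ (with $h(0)/0=\infty$), and $\tilde g^{(\varepsilon)}_t(x)=c_\varepsilon t^{(d+\beta-1)/\alpha}e^{-|x|}$ if $|x|\ge\varepsilon$,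 where $c_\varepsilon=\Big(\frac{1}{h^{-1}(1/\tau)}\wedge\frac{\tau h(\varepsilon)}{\varepsilon}\Big)\frac{e^{\varepsilon}}{\tau^{(d+\beta-1)/\alpha}}$. *)

theory Defs
  imports "HOL-Analysis.Analysis"
begin

definition levy_density :: "(real \<Rightarrow> real) \<Rightarrow> bool" where
  "levy_density \<nu> \<longleftrightarrow>
     \<nu> \<in> borel_measurable borel \<and> (\<forall>x. 0 \<le> \<nu> x) \<and> (\<forall>x. \<nu> (-x) = \<nu> x) \<and>
     integrable lborel (\<lambda>x. min (x\<^sup>2) 1 * \<nu> x) \<and>
     (\<integral>\<^sup>+ x. ennreal (\<nu> x) \<partial>lborel) = \<infinity>"

definition psi :: "(real \<Rightarrow> real) \<Rightarrow> real \<Rightarrow> real" where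
  "psi \<nu> \<xi> = (\<integral> x. (1 - cos (\<xi> * x)) * \<nu> x \<partial>lborel)"

definition hfun :: "(real \<Rightarrow> real) \<Rightarrow> real \<Rightarrow> real" where
  "hfun \<nu> r = (\<integral> x. min 1 (x\<^sup>2 / r\<^sup>2) * \<nu> x \<partial>lborel)"

definition hinv :: "(real \<Rightarrow> real) \<Rightarrow> real \<Rightarrow> real" where
  "hinv \<nu> s = (THE r. 0 < r \<and> hfun \<nu> r = s)"

text \<open>The function \<tilde>g^(\<epsilon>)_t(x), depending also on \<tau>, d, \<alpha>, \<beta>.
  At x = 0 the convention h(0)/0 = \<infinity> gives the value 1/h^{-1}(1/t).\<close>
definition gtilde ::
  "(real \<Rightarrow> real) \<Rightarrow> nat \<Rightarrow> real \<Rightarrow> real \<Rightarrow> real \<Rightarrow> real \<Rightarrow> real \<Rightarrow> real \<Rightarrow> real" where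
  "gtilde \<nu> d \<alpha> \<beta> \<tau> \<epsilon> t x =
     (if \<bar>x\<bar> < \<epsilon> then
        (if x = 0 then 1 / hinv \<nu> (1 / t)
         else min (1 / hinv \<nu> (1 / t)) (t * hfun \<nu> \<bar>x\<bar> / \<bar>x\<bar>))
      else
        (min (1 / hinv \<nu> (1 / \<tau>)) (\<tau> * hfun \<nu> \<epsilon> / \<epsilon>) * exp \<epsilon>
           / \<tau> powr ((real d + \<beta> - 1) / \<alpha>))
        * t powr ((real d + \<beta> - 1) / \<alpha>) * exp (- \<bar>x\<bar>))"

end

theory Submission
  imports Defs
begin


lemma one_minus_cos_le: "1 - cos (u::real) \<le> u\<^sup>2 / 2"
proof -
  have "cos u = 1 - 2 * (sin (u/2))\<^sup>2" using cos_double_sin[of "u/2"] by simp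
  moreover have "(sin (u/2))\<^sup>2 \<le> (u/2)\<^sup>2"
    using abs_sin_x_le_abs_x[of "u/2"] by (metis abs_ge_zero power2_abs power_mono)
  ultimately show ?thesis by (simp add: power_divide)
qed

lemma sin_le5: "sin (u::real) \<le> u - u^3/6 + \<bar>u\<bar>^5/120"
proof -
  have "\<bar>sin u - (\<Sum>m<5. sin_coeff m * u ^ m)\<bar> \<le> inverse (fact 5) * \<bar>u\<bar> ^ 5"
    by (rule Maclaurin_sin_bound)
  moreover have "(\<Sum>m<5. sin_coeff m * u ^ m) = u - u^3/6"
    by (simp add: lessThan_nat_numeral sin_coeff_def fact_numeral)
  ultimately have "\<bar>sin u - (u - u ^ 3 / 6)\<bar> * 120 \<le> \<bar>u\<bar> ^ 5" by (simp add: fact_numeral)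
  then show ?thesis by argo
qed

lemma sinc_bound_pos: assumes "0 < (u::real)" shows "sin u / u \<le> 1 - 2/15 * min 1 (u\<^sup>2)"
proof (cases "u \<le> 2")
  case True
  have "sin u \<le> u - u^3/6 + u^5/120" using sin_le5[of u] assms by simp
  then have "sin u / u \<le> (u - u^3/6 + u^5/120) / u" using assms by (simp add: divide_right_mono)
  also have "\<dots> = 1 - u\<^sup>2/6 + u^4/120" using assms by (simp add: field_simps eval_nat_numeral)
  also have "\<dots> \<le> 1 - 2/15 * u\<^sup>2"
  proof -
    have "u^4 = u\<^sup>2 * u\<^sup>2" by (simp add: eval_nat_numeral)
    also have "\<dots> \<le> 4 * u\<^sup>2" using True assms
      by (intro mult_right_mono) (auto simp: power2_eq_square intro: order.trans[OF mult_right_mono[of u 2 u]])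
    finally show ?thesis by simp
  qed
  also have "\<dots> \<le> 1 - 2/15 * min 1 (u\<^sup>2)" by (simp add: min_def)
  finally show ?thesis .
next
  case False
  have "sin u / u \<le> 1 / u" using assms sin_le_one[of u] by (simp add: divide_right_mono)
  also have "\<dots> \<le> 1/2" using False by (simp add: field_simps)
  also have "\<dots> \<le> 1 - 2/15 * min 1 (u\<^sup>2)" by (simp add: min_def)
  finally show ?thesis by simp
qed

lemma sinc_bound: assumes "(u::real) \<noteq> 0" shows "sin u / u \<le> 1 - 2/15 * min 1 (u\<^sup>2)"
proof (cases "u > 0")
  case True then show ?thesis by (rule sinc_bound_pos)
next
  case False
  then have "-u > 0" using assms by simp
  from sinc_bound_pos[OF this] show ?thesis by simp
qed

lemma nn_abs:
  fixes f :: "real \<Rightarrow> ennreal"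
  assumes [measurable]: "f \<in> borel_measurable borel"
  shows "(\<integral>\<^sup>+x. f \<bar>x\<bar> \<partial>lborel) \<le> 2 * (\<integral>\<^sup>+x. f x * indicator {0..} x \<partial>lborel)"
proof -
  have "(\<integral>\<^sup>+x. f \<bar>x\<bar> \<partial>lborel) \<le> (\<integral>\<^sup>+x. f x * indicator {0..} x + f (-x) * indicator {0..} (-x) \<partial>lborel)"
    by (intro nn_integral_mono) (auto simp: indicator_def)
  also have "\<dots> = (\<integral>\<^sup>+x. f x * indicator {0..} x \<partial>lborel) + (\<integral>\<^sup>+x. f (-x) * indicator {0..} (-x) \<partial>lborel)"
    by (rule nn_integral_add) auto
  also have "(\<integral>\<^sup>+x. f (-x) * indicator {0..} (-x) \<partial>lborel) = (\<integral>\<^sup>+x. f x * indicator {0..} x \<partial>distr lborel borel uminus)"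
    by (subst nn_integral_distr) auto
  also have "\<dots> = (\<integral>\<^sup>+x. f x * indicator {0..} x \<partial>lborel)" by (simp add: lborel_distr_uminus)
  finally show ?thesis by (simp add: mult_2)
qed

lemma int_exp: assumes "0 \<le> c" shows "(\<integral>\<^sup>+y. ennreal (c * exp (-y)) * indicator {0..} y \<partial>lborel) = ennreal c"
proof -
  have "(\<integral>\<^sup>+y. ennreal (c * exp (-y)) * indicator {0..} y \<partial>lborel) = 0 - (- c * exp (- 0))"
  proof (rule nn_integral_FTC_atLeast)
    show "(\<lambda>y. c * exp (-y)) \<in> borel_measurable borel" by measurable
    show "DERIV (\<lambda>y. - c * exp (-y)) x :> c * exp (-x)" for x by (auto intro!: derivative_eq_intros)
    show "0 \<le> c * exp (-x)" for x using assms by simp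
    have "((\<lambda>y. - c * exp (-y)) \<longlongrightarrow> - c * 0) at_top"
      by (intro tendsto_intros filterlim_compose[OF exp_at_bot] filterlim_uminus_at_bot_at_top)
    then show "((\<lambda>y. - c * exp (-y)) \<longlongrightarrow> 0) at_top" by simp
  qed
  then show ?thesis by simp
qed

lemma int_pow: assumes "0 \<le> c" "0 < R" "0 < a"
  shows "(\<integral>\<^sup>+y. ennreal (c * y powr (-1-a)) * indicator {R..} y \<partial>lborel) = ennreal (c * R powr (-a) / a)"
proof -
  have "(\<integral>\<^sup>+y. ennreal (c * y powr (-1-a)) * indicator {R..} y \<partial>lborel) = 0 - (- c * R powr (-a) / a)"
  proof (rule nn_integral_FTC_atLeast)
    show "(\<lambda>y. c * y powr (-1-a)) \<in> borel_measurable borel" by measurable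
    show "DERIV (\<lambda>y. - c * y powr (-a) / a) x :> c * x powr (-1-a)" if "R \<le> x" for x
    proof -
      have x: "0 < x" using that assms by simp
      show ?thesis using x assms
        by (auto intro!: derivative_eq_intros simp: powr_diff powr_minus field_simps)
    qed
    show "0 \<le> c * x powr (-1-a)" for x using assms by simp
    have "((\<lambda>y. - c * y powr (-a) / a) \<longlongrightarrow> - c * 0 / a) at_top"
      using assms by (intro tendsto_intros tendsto_neg_powr filterlim_ident) auto
    then show "((\<lambda>y. - c * y powr (-a) / a) \<longlongrightarrow> 0) at_top" by simp
  qed
  then show ?thesis by simp
qed

locale L =
  fixes \<nu> :: "real \<Rightarrow> real"
  assumes meas[measurable]: "\<nu> \<in> borel_measurable borel"
    and nn: "\<And>x. 0 \<le> \<nu> x"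
    and intI: "integrable lborel (\<lambda>x. min (x\<^sup>2) 1 * \<nu> x)"
begin

lemma int_h: "integrable lborel (\<lambda>x. min 1 (x\<^sup>2 / r\<^sup>2) * \<nu> x)"
proof (rule Bochner_Integration.integrable_bound)
  show "integrable lborel (\<lambda>x. max 1 (1/r\<^sup>2) * (min (x\<^sup>2) 1 * \<nu> x))"
    using intI by simp
  show "(\<lambda>x. min 1 (x\<^sup>2 / r\<^sup>2) * \<nu> x) \<in> borel_measurable lborel" by measurable
  show "AE x in lborel. norm (min 1 (x\<^sup>2 / r\<^sup>2) * \<nu> x) \<le> norm (max 1 (1/r\<^sup>2) * (min (x\<^sup>2) 1 * \<nu> x))"
  proof (rule AE_I2)
    fix x
    have "min 1 (x\<^sup>2 / r\<^sup>2) \<le> max 1 (1/r\<^sup>2) * min (x\<^sup>2) 1"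
    proof (cases "x\<^sup>2 \<le> 1")
      case True
      have "x\<^sup>2 / r\<^sup>2 = (1/r\<^sup>2) * x\<^sup>2" by simp
      also have "\<dots> \<le> max 1 (1/r\<^sup>2) * x\<^sup>2" by (intro mult_right_mono) auto
      finally show ?thesis using True by (simp add: min_def)
    next
      case False
      then show ?thesis by (simp add: min_def max_def)
    qed
    then show "norm (min 1 (x\<^sup>2 / r\<^sup>2) * \<nu> x) \<le> norm (max 1 (1/r\<^sup>2) * (min (x\<^sup>2) 1 * \<nu> x))"
      using nn[of x] by (simp add: abs_mult) (metis mult.assoc mult_right_mono)
  qed
qed

lemma h_nonneg: "0 \<le> hfun \<nu> r"
  unfolding hfun_def by (intro integral_nonneg_AE AE_I2) (simp add: nn)

lemma int_psi: "integrable lborel (\<lambda>x. (1 - cos (\<xi> * x)) * \<nu> x)"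
proof (rule Bochner_Integration.integrable_bound)
  show "integrable lborel (\<lambda>x. 2 * max 1 (\<xi>\<^sup>2) * (min (x\<^sup>2) 1 * \<nu> x))"
    using intI by simp
  show "(\<lambda>x. (1 - cos (\<xi> * x)) * \<nu> x) \<in> borel_measurable lborel" by measurable
  show "AE x in lborel. norm ((1 - cos (\<xi> * x)) * \<nu> x) \<le> norm (2 * max 1 (\<xi>\<^sup>2) * (min (x\<^sup>2) 1 * \<nu> x))"
  proof (rule AE_I2)
    fix x
    have c1: "1 - cos (\<xi> * x) \<le> 2" using cos_ge_minus_one[of "\<xi>*x"] by simp
    have c2: "1 - cos (\<xi> * x) \<le> \<xi>\<^sup>2 * x\<^sup>2" using one_minus_cos_le[of "\<xi>*x"]
      by (simp add: power_mult_distrib) (smt (verit) zero_le_power2 mult_nonneg_nonneg)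
    have c0: "0 \<le> 1 - cos (\<xi> * x)" by simp
    have "1 - cos (\<xi> * x) \<le> 2 * max 1 (\<xi>\<^sup>2) * min (x\<^sup>2) 1"
    proof (cases "x\<^sup>2 \<le> 1")
      case True
      have "\<xi>\<^sup>2 * x\<^sup>2 \<le> 2 * max 1 (\<xi>\<^sup>2) * x\<^sup>2" by (intro mult_right_mono) auto
      then show ?thesis using True c2 by (simp add: min_def)
    next
      case False
      then show ?thesis using c1 by (simp add: min_def max_def) (smt (verit) cos_ge_minus_one)
    qed
    then show "norm ((1 - cos (\<xi> * x)) * \<nu> x) \<le> norm (2 * max 1 (\<xi>\<^sup>2) * (min (x\<^sup>2) 1 * \<nu> x))"
      using nn[of x] c0 by (simp add: abs_mult) (metis mult.assoc mult_right_mono)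
  qed
qed

lemma psi_nonneg: "0 \<le> psi \<nu> \<xi>"
  unfolding psi_def by (intro integral_nonneg_AE AE_I2) (simp add: nn)

lemma psi_le_h: assumes "0 < \<xi>" shows "psi \<nu> \<xi> \<le> 2 * hfun \<nu> (1/\<xi>)"
proof -
  have "psi \<nu> \<xi> \<le> (\<integral>x. 2 * (min 1 (x\<^sup>2 / (1/\<xi>)\<^sup>2) * \<nu> x) \<partial>lborel)"
    unfolding psi_def
  proof (rule integral_mono[OF int_psi])
    show "integrable lborel (\<lambda>x. 2 * (min 1 (x\<^sup>2 / (1 / \<xi>)\<^sup>2) * \<nu> x))" using int_h by simp
    fix x
    have c1: "1 - cos (\<xi> * x) \<le> 2" using cos_ge_minus_one[of "\<xi>*x"] by simp
    have c2: "1 - cos (\<xi> * x) \<le> \<xi>\<^sup>2 * x\<^sup>2" using one_minus_cos_le[of "\<xi>*x"]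
      by (simp add: power_mult_distrib) (smt (verit) zero_le_power2 mult_nonneg_nonneg)
    have "x\<^sup>2 / (1 / \<xi>)\<^sup>2 = \<xi>\<^sup>2 * x\<^sup>2" by (simp add: power_divide)
    moreover have "0 \<le> \<xi>\<^sup>2 * x\<^sup>2" by simp
    ultimately have "1 - cos (\<xi> * x) \<le> 2 * min 1 (x\<^sup>2 / (1/\<xi>)\<^sup>2)" using c1 c2 mult_nonneg_nonneg[OF zero_le_power2[of \<xi>] zero_le_power2[of x]] by (simp add: min_def) (smt (verit) cos_le_one)
    then show "(1 - cos (\<xi> * x)) * \<nu> x \<le> 2 * (min 1 (x\<^sup>2 / (1 / \<xi>)\<^sup>2) * \<nu> x)"
      using nn[of x] by (metis mult.assoc mult_right_mono)
  qed
  also have "\<dots> = 2 * hfun \<nu> (1/\<xi>)" unfolding hfun_def by simp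
  finally show ?thesis .
qed

lemma inner_int:
  assumes "0 < \<xi>"
  shows "ennreal (\<xi> * (2/15 * min 1 (y\<^sup>2 / (1/\<xi>)\<^sup>2))) \<le>
     (\<integral>\<^sup>+s. ennreal (indicator {0..\<xi>} s * (1 - cos (s * y))) \<partial>lborel)"
proof (cases "y = 0")
  case True then show ?thesis by simp
next
  case False
  have D: "((\<lambda>s. 1 - cos (s * y)) has_integral ((\<xi> - sin (\<xi> * y) / y) - (0 - sin (0 * y) / y))) {0..\<xi>}"
  proof (rule fundamental_theorem_of_calculus)
    show "0 \<le> \<xi>" using assms by simp
    fix s assume "s \<in> {0..\<xi>}"
    have "((\<lambda>s. s - sin (s * y) / y) has_real_derivative (1 - cos (s * y))) (at s)"
      using False by (auto intro!: derivative_eq_intros)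
    then show "((\<lambda>s. s - sin (s * y) / y) has_vector_derivative (1 - cos (s * y))) (at s within {0..\<xi>})"
      by (simp add: has_real_derivative_iff_has_vector_derivative has_vector_derivative_at_within)
  qed
  then have D': "((\<lambda>s. 1 - cos (s * y)) has_integral (\<xi> - sin (\<xi> * y) / y)) {0..\<xi>}" by simp
  have "(\<integral>\<^sup>+s. ennreal (indicator {0..\<xi>} s * (1 - cos (s * y))) \<partial>lborel) = ennreal (\<xi> - sin (\<xi> * y) / y)"
    by (rule nn_integral_has_integral_lebesgue[OF _ D']) simp
  moreover have "\<xi> * (2/15 * min 1 (y\<^sup>2 / (1/\<xi>)\<^sup>2)) \<le> \<xi> - sin (\<xi> * y) / y"
  proof -
    have "\<xi> * y \<noteq> 0" using False assms by simp
    from sinc_bound[OF this] have "sin (\<xi> * y) / (\<xi> * y) \<le> 1 - 2/15 * min 1 ((\<xi> * y)\<^sup>2)" .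
    then have "\<xi> * (sin (\<xi> * y) / (\<xi> * y)) \<le> \<xi> * (1 - 2/15 * min 1 ((\<xi> * y)\<^sup>2))"
      using assms by (intro mult_left_mono) auto
    moreover have "\<xi> * (sin (\<xi> * y) / (\<xi> * y)) = sin (\<xi> * y) / y" using assms by simp
    moreover have "y\<^sup>2 / (1/\<xi>)\<^sup>2 = (\<xi> * y)\<^sup>2" by (simp add: power_divide power_mult_distrib)
    ultimately show ?thesis by (simp add: algebra_simps)
  qed
  ultimately show ?thesis by (simp add: ennreal_leI)
qed

lemma h_le_avg:
  assumes "0 < \<xi>" and P: "\<And>s. 0 \<le> s \<Longrightarrow> s \<le> \<xi> \<Longrightarrow> psi \<nu> s \<le> P"
  shows "2/15 * hfun \<nu> (1/\<xi>) \<le> P"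
proof -
  have P0: "0 \<le> P" using P[of 0] psi_nonneg[of 0] assms(1) by simp
  have eq_psi: "(\<integral>\<^sup>+y. ennreal ((1 - cos (s*y)) * \<nu> y) \<partial>lborel) = ennreal (psi \<nu> s)" for s
    unfolding psi_def by (rule nn_integral_eq_integral[OF int_psi]) (simp add: nn)
  have "ennreal (\<xi> * (2/15 * hfun \<nu> (1/\<xi>))) = ennreal (\<integral>y. \<xi> * (2/15 * min 1 (y\<^sup>2 / (1/\<xi>)\<^sup>2)) * \<nu> y \<partial>lborel)"
    unfolding hfun_def by (simp add: mult.assoc)
  also have "\<dots> = (\<integral>\<^sup>+y. ennreal (\<xi> * (2/15 * min 1 (y\<^sup>2 / (1/\<xi>)\<^sup>2)) * \<nu> y) \<partial>lborel)"
    using assms(1) int_h[of "1/\<xi>"] nn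
    by (intro nn_integral_eq_integral[symmetric]) (auto simp: mult.assoc)
  also have "\<dots> \<le> (\<integral>\<^sup>+y. (\<integral>\<^sup>+s. ennreal (indicator {0..\<xi>} s * (1 - cos (s * y))) \<partial>lborel) * ennreal (\<nu> y) \<partial>lborel)"
  proof (rule nn_integral_mono)
    fix y
    have "ennreal (\<xi> * (2/15 * min 1 (y\<^sup>2 / (1/\<xi>)\<^sup>2)) * \<nu> y) = ennreal (\<xi> * (2/15 * min 1 (y\<^sup>2 / (1/\<xi>)\<^sup>2))) * ennreal (\<nu> y)"
      using assms(1) nn by (intro ennreal_mult) auto
    also have "\<dots> \<le> (\<integral>\<^sup>+s. ennreal (indicator {0..\<xi>} s * (1 - cos (s * y))) \<partial>lborel) * ennreal (\<nu> y)"
      by (intro mult_right_mono inner_int assms(1)) simp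
    finally show "ennreal (\<xi> * (2/15 * min 1 (y\<^sup>2 / (1/\<xi>)\<^sup>2)) * \<nu> y) \<le> \<dots>" .
  qed
  also have "\<dots> = (\<integral>\<^sup>+y. (\<integral>\<^sup>+s. ennreal (indicator {0..\<xi>} s * (1 - cos (s * y)) * \<nu> y) \<partial>lborel) \<partial>lborel)"
    by (intro nn_integral_cong, subst nn_integral_multc[symmetric]) (auto intro!: nn_integral_cong simp: ennreal_mult'[symmetric] nn)
  also have "\<dots> = (\<integral>\<^sup>+s. (\<integral>\<^sup>+y. ennreal (indicator {0..\<xi>} s * (1 - cos (s * y)) * \<nu> y) \<partial>lborel) \<partial>lborel)"
    by (rule lborel_pair.Fubini') measurable
  also have "\<dots> = (\<integral>\<^sup>+s. ennreal (indicator {0..\<xi>} s) * ennreal (psi \<nu> s) \<partial>lborel)"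
  proof (rule nn_integral_cong)
    fix s
    have "(\<integral>\<^sup>+y. ennreal (indicator {0..\<xi>} s * (1 - cos (s * y)) * \<nu> y) \<partial>lborel)
        = (\<integral>\<^sup>+y. ennreal (indicator {0..\<xi>} s) * ennreal ((1 - cos (s * y)) * \<nu> y) \<partial>lborel)"
      by (intro nn_integral_cong) (simp add: ennreal_mult'[symmetric] mult.assoc)
    also have "\<dots> = ennreal (indicator {0..\<xi>} s) * ennreal (psi \<nu> s)"
      by (subst nn_integral_cmult) (auto simp: eq_psi)
    finally show "(\<integral>\<^sup>+y. ennreal (indicator {0..\<xi>} s * (1 - cos (s * y)) * \<nu> y) \<partial>lborel) = \<dots>" .
  qed
  also have "\<dots> \<le> (\<integral>\<^sup>+s. ennreal P * indicator {0..\<xi>} s \<partial>lborel)"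
    by (intro nn_integral_mono) (auto simp: indicator_def P ennreal_leI)
  also have "\<dots> = ennreal (\<xi> * P)"
    using assms(1) P0 by (simp add: nn_integral_cmult_indicator ennreal_mult' mult.commute)
  finally have "\<xi> * (2/15 * hfun \<nu> (1/\<xi>)) \<le> \<xi> * P"
    using assms(1) P0 by (subst (asm) ennreal_le_iff) auto
  then show ?thesis using assms(1) by simp
qed

lemma h_le_psi:
  assumes Cl: "0 < Cl" and lower: "\<And>lam \<theta>. 1 \<le> lam \<Longrightarrow> 0 \<le> \<theta> \<Longrightarrow> psi \<nu> (lam * \<theta>) \<ge> Cl * lam powr \<alpha> * psi \<nu> \<theta>"
    and "0 < \<xi>" and al: "0 \<le> \<alpha>"
  shows "hfun \<nu> (1/\<xi>) \<le> 15 / (2 * Cl) * psi \<nu> \<xi>"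
proof -
  have "2/15 * hfun \<nu> (1/\<xi>) \<le> psi \<nu> \<xi> / Cl"
  proof (rule h_le_avg[OF \<open>0 < \<xi>\<close>])
    fix s assume s: "0 \<le> s" "s \<le> \<xi>"
    show "psi \<nu> s \<le> psi \<nu> \<xi> / Cl"
    proof (cases "s = 0")
      case True
      then show ?thesis using psi_nonneg[of \<xi>] Cl by (simp add: psi_def)
    next
      case False
      then have sp: "0 < s" using s by simp
      have l1: "1 \<le> \<xi> / s" using s sp by simp
      have "Cl * (\<xi>/s) powr \<alpha> * psi \<nu> s \<le> psi \<nu> ((\<xi>/s) * s)" by (rule lower[OF l1 s(1)])
      moreover have "(\<xi>/s) * s = \<xi>" using sp by simp
      moreover have "Cl * psi \<nu> s \<le> Cl * (\<xi>/s) powr \<alpha> * psi \<nu> s"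
      proof -
        have "1 \<le> (\<xi>/s) powr \<alpha>" by (rule ge_one_powr_ge_zero[OF l1 al])
        then have "1 * psi \<nu> s \<le> (\<xi>/s) powr \<alpha> * psi \<nu> s" using psi_nonneg[of s] by (rule mult_right_mono)
        then show ?thesis using Cl by (simp add: mult_left_mono mult.assoc)
      qed
      ultimately have "Cl * psi \<nu> s \<le> psi \<nu> \<xi>" by simp
      then show ?thesis using Cl by (simp add: field_simps)
    qed
  qed
  then show ?thesis using Cl by (simp add: field_simps)
qed

lemma h_scaling:
  assumes Cl: "0 < Cl" and lower: "\<And>lam \<theta>. 1 \<le> lam \<Longrightarrow> 0 \<le> \<theta> \<Longrightarrow> psi \<nu> (lam * \<theta>) \<ge> Cl * lam powr \<alpha> * psi \<nu> \<theta>"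
    and al: "0 \<le> \<alpha>" and r: "0 < r" "r \<le> x"
  shows "hfun \<nu> x \<le> 15 / Cl\<^sup>2 * (r/x) powr \<alpha> * hfun \<nu> r"
proof -
  have xp: "0 < x" using r by simp
  have "hfun \<nu> (1/(1/x)) \<le> 15 / (2 * Cl) * psi \<nu> (1/x)"
    by (rule h_le_psi[OF Cl lower _ al]) (use xp in auto)
  then have A: "hfun \<nu> x \<le> 15 / (2 * Cl) * psi \<nu> (1/x)" by simp
  have l1: "1 \<le> x / r" using r by simp
  have "Cl * (x/r) powr \<alpha> * psi \<nu> (1/x) \<le> psi \<nu> ((x/r) * (1/x))"
    by (rule lower[OF l1]) (use xp in simp)
  also have "(x/r) * (1/x) = 1/r" using xp by simp
  also have "psi \<nu> (1/r) \<le> 2 * hfun \<nu> (1/(1/r))" by (rule psi_le_h) (use r in simp)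
  finally have B: "Cl * (x/r) powr \<alpha> * psi \<nu> (1/x) \<le> 2 * hfun \<nu> r" by simp
  have pos: "0 < (x/r) powr \<alpha>" using r by simp
  have inv: "(r/x) powr \<alpha> = 1 / (x/r) powr \<alpha>" using r by (simp add: powr_divide)
  from B have "psi \<nu> (1/x) \<le> 2 * hfun \<nu> r / (Cl * (x/r) powr \<alpha>)"
    using Cl pos by (simp add: field_simps)
  then have "15 / (2 * Cl) * psi \<nu> (1/x) \<le> 15 / (2 * Cl) * (2 * hfun \<nu> r / (Cl * (x/r) powr \<alpha>))"
    using Cl by (intro mult_left_mono) auto
  also have "\<dots> = 15 / Cl\<^sup>2 * (r/x) powr \<alpha> * hfun \<nu> r"
    using Cl pos by (simp add: inv field_simps power2_eq_square)
  finally show ?thesis using A by simp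
qed

lemma pt_lip:
  fixes r r' x :: real
  assumes "0 < r" "0 < r'"
  shows "\<bar>min 1 (x\<^sup>2 / r'\<^sup>2) - min 1 (x\<^sup>2 / r\<^sup>2)\<bar> \<le> \<bar>1/r'\<^sup>2 - 1/r\<^sup>2\<bar> * max 1 (max (r\<^sup>2) (r'\<^sup>2)) * min (x\<^sup>2) 1"
proof (cases "x\<^sup>2 \<ge> max (r\<^sup>2) (r'\<^sup>2)")
  case True
  then have "x\<^sup>2 / r'\<^sup>2 \<ge> 1" "x\<^sup>2 / r\<^sup>2 \<ge> 1" using assms by (auto simp: field_simps)
  then show ?thesis by (simp add: min_def)
next
  case False
  let ?M = "max (r\<^sup>2) (r'\<^sup>2)"
  have "\<bar>min 1 (x\<^sup>2 / r'\<^sup>2) - min 1 (x\<^sup>2 / r\<^sup>2)\<bar> \<le> \<bar>x\<^sup>2 / r'\<^sup>2 - x\<^sup>2 / r\<^sup>2\<bar>"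
    by (simp add: min_def abs_if)
  also have "\<dots> = \<bar>(1/r'\<^sup>2 - 1/r\<^sup>2) * x\<^sup>2\<bar>" by (simp add: algebra_simps)
  also have "\<dots> = \<bar>1/r'\<^sup>2 - 1/r\<^sup>2\<bar> * x\<^sup>2" by (simp add: abs_mult)
  also have "x\<^sup>2 \<le> max 1 ?M * min (x\<^sup>2) 1"
  proof (cases "x\<^sup>2 \<le> 1")
    case True
    have "1 * x\<^sup>2 \<le> max 1 ?M * x\<^sup>2" by (intro mult_right_mono) auto
    then show ?thesis using True by (simp add: min_def)
  next
    case False2: False
    then show ?thesis using False by (simp add: min_def max_def)
  qed
  then have "\<bar>1/r'\<^sup>2 - 1/r\<^sup>2\<bar> * x\<^sup>2 \<le> \<bar>1/r'\<^sup>2 - 1/r\<^sup>2\<bar> * (max 1 ?M * min (x\<^sup>2) 1)"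
    by (intro mult_left_mono) auto
  finally show ?thesis by (simp add: mult.assoc)
qed

definition "II = (\<integral>x. min (x\<^sup>2) 1 * \<nu> x \<partial>lborel)"

lemma h_lip:
  assumes "0 < r" "0 < r'"
  shows "\<bar>hfun \<nu> r' - hfun \<nu> r\<bar> \<le> \<bar>1/r'\<^sup>2 - 1/r\<^sup>2\<bar> * max 1 (max (r\<^sup>2) (r'\<^sup>2)) * II"
proof -
  let ?K = "\<bar>1/r'\<^sup>2 - 1/r\<^sup>2\<bar> * max 1 (max (r\<^sup>2) (r'\<^sup>2))"
  have eq: "hfun \<nu> r' - hfun \<nu> r = (\<integral>x. (min 1 (x\<^sup>2 / r'\<^sup>2) - min 1 (x\<^sup>2 / r\<^sup>2)) * \<nu> x \<partial>lborel)"
    unfolding hfun_def using int_h[of r'] int_h[of r] by (simp add: left_diff_distrib)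
  have "\<bar>\<integral>x. (min 1 (x\<^sup>2 / r'\<^sup>2) - min 1 (x\<^sup>2 / r\<^sup>2)) * \<nu> x \<partial>lborel\<bar> \<le> (\<integral>x. ?K * (min (x\<^sup>2) 1 * \<nu> x) \<partial>lborel)"
  proof (rule integral_abs_bound_integral)
    show "integrable lborel (\<lambda>x. (min 1 (x\<^sup>2 / r'\<^sup>2) - min 1 (x\<^sup>2 / r\<^sup>2)) * \<nu> x)"
      using int_h[of r'] int_h[of r] by (simp add: left_diff_distrib)
    show "integrable lborel (\<lambda>x. ?K * (min (x\<^sup>2) 1 * \<nu> x))" using intI by simp
    fix x
    show "\<bar>(min 1 (x\<^sup>2 / r'\<^sup>2) - min 1 (x\<^sup>2 / r\<^sup>2)) * \<nu> x\<bar> \<le> ?K * (min (x\<^sup>2) 1 * \<nu> x)"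
      using pt_lip[OF assms, of x] nn[of x] by (simp add: abs_mult mult.assoc[symmetric] mult_right_mono)
  qed
  then show ?thesis using eq by (simp add: II_def)
qed

lemma h_cont_at: assumes "0 < r" shows "isCont (hfun \<nu>) r"
proof -
  let ?g = "\<lambda>r'. \<bar>1/r'\<^sup>2 - 1/r\<^sup>2\<bar> * max 1 (4 * r\<^sup>2) * II"
  have "((\<lambda>r'. hfun \<nu> r' - hfun \<nu> r) \<longlongrightarrow> 0) (at r)"
  proof (rule Lim_null_comparison)
    have "(?g \<longlongrightarrow> \<bar>1/r\<^sup>2 - 1/r\<^sup>2\<bar> * max 1 (4 * r\<^sup>2) * II) (at r)"
      using assms by (intro tendsto_intros) auto
    then show "(?g \<longlongrightarrow> 0) (at r)" by simp
    have "\<forall>r'. r' \<noteq> r \<and> dist r' r < r/2 \<longrightarrow> norm (hfun \<nu> r' - hfun \<nu> r) \<le> ?g r'"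
    proof (intro allI impI)
      fix r' assume "r' \<noteq> r \<and> dist r' r < r/2"
      then have r': "r/2 < r'" "r' < 2 * r" using assms by (auto simp: dist_real_def) (smt (verit))+
      then have rp: "0 < r'" using assms by simp
      have "max (r\<^sup>2) (r'\<^sup>2) \<le> 4 * r\<^sup>2"
      proof -
        have "r'\<^sup>2 \<le> (2*r)\<^sup>2" using r' rp by (intro power_mono) auto
        then show ?thesis by (simp add: power_mult_distrib)
      qed
      then have m: "max 1 (max (r\<^sup>2) (r'\<^sup>2)) \<le> max 1 (4 * r\<^sup>2)"
        using zero_le_power2[of r] by linarith
      have II0: "0 \<le> II" unfolding II_def by (intro integral_nonneg_AE AE_I2) (simp add: nn)
      have "\<bar>hfun \<nu> r' - hfun \<nu> r\<bar> \<le> \<bar>1/r'\<^sup>2 - 1/r\<^sup>2\<bar> * max 1 (max (r\<^sup>2) (r'\<^sup>2)) * II"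
        by (rule h_lip[OF assms rp])
      also have "\<dots> \<le> ?g r'" using m II0 by (intro mult_right_mono mult_left_mono) auto
      finally show "norm (hfun \<nu> r' - hfun \<nu> r) \<le> ?g r'" by simp
    qed
    then show "\<forall>\<^sub>F x in at r. norm (hfun \<nu> x - hfun \<nu> r) \<le> ?g x"
      unfolding eventually_at using assms by (intro exI[of _ "r/2"]) auto
  qed
  then show ?thesis unfolding isCont_def by (simp add: LIM_zero_iff)
qed

end

locale L2 = L +
  fixes Cl \<alpha> \<eta> :: real
  assumes Cl: "0 < Cl" and al: "0 < \<alpha>"
    and lower: "\<And>lam \<theta>. 1 \<le> lam \<Longrightarrow> 0 \<le> \<theta> \<Longrightarrow> psi \<nu> (lam * \<theta>) \<ge> Cl * lam powr \<alpha> * psi \<nu> \<theta>"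
    and eta: "0 < \<eta>"
    and dec: "\<And>x y. 0 < x \<Longrightarrow> x < y \<Longrightarrow> y < \<eta> \<Longrightarrow> \<nu> y < \<nu> x"
begin

lemma nu_pos: "0 < x \<Longrightarrow> x < \<eta> \<Longrightarrow> 0 < \<nu> x"
  using dec[of x "(x+\<eta>)/2"] nn[of "(x+\<eta>)/2"] by simp

lemma h_strict: assumes "0 < r1" "r1 < r2" shows "hfun \<nu> r2 < hfun \<nu> r1"
proof -
  define b where "b = min r1 \<eta> / 2"
  define a where "a = b / 2"
  have ab: "0 < a" "a < b" "b < r1" "b < \<eta>" using assms eta by (auto simp: a_def b_def)
  define c where "c = a\<^sup>2 * (1/r1\<^sup>2 - 1/r2\<^sup>2)"
  have "1/r2\<^sup>2 < 1/r1\<^sup>2" using assms by (simp add: field_simps power_strict_mono)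
  then have c0: "0 < c" using ab by (simp add: c_def)
  have nb: "0 < \<nu> b" using nu_pos ab by simp
  have "c * \<nu> b * (b - a) = (\<integral>x. indicator {a..b} x * (c * \<nu> b) \<partial>lborel)"
    using ab by simp
  also have "\<dots> \<le> (\<integral>x. (min 1 (x\<^sup>2 / r1\<^sup>2) - min 1 (x\<^sup>2 / r2\<^sup>2)) * \<nu> x \<partial>lborel)"
  proof (rule integral_mono)
    show "integrable lborel (\<lambda>x. indicator {a..b} x * (c * \<nu> b))"
    proof -
      have "integrable lborel (indicat_real {a..b})" by (rule integrable_real_indicator) (use ab in \<open>simp_all add: emeasure_lborel_Icc\<close>)
      then show ?thesis by simp
    qed
    show "integrable lborel (\<lambda>x. (min 1 (x\<^sup>2 / r1\<^sup>2) - min 1 (x\<^sup>2 / r2\<^sup>2)) * \<nu> x)"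
      using int_h[of r1] int_h[of r2] by (simp add: left_diff_distrib)
    fix x
    have "x\<^sup>2 / r2\<^sup>2 \<le> x\<^sup>2 / r1\<^sup>2"
      using assms by (intro divide_left_mono power_mono) auto
    then have mono: "min 1 (x\<^sup>2 / r2\<^sup>2) \<le> min 1 (x\<^sup>2 / r1\<^sup>2)" by (intro min.mono) auto
    show "indicator {a..b} x * (c * \<nu> b) \<le> (min 1 (x\<^sup>2 / r1\<^sup>2) - min 1 (x\<^sup>2 / r2\<^sup>2)) * \<nu> x"
    proof (cases "x \<in> {a..b}")
      case False
      then show ?thesis using mono nn[of x] by simp
    next
      case True
      then have x: "a \<le> x" "x \<le> b" by auto
      have nx: "\<nu> b \<le> \<nu> x" using dec[of x b] x ab by (cases "x = b") auto
      have "x\<^sup>2 / r1\<^sup>2 \<le> 1" "x\<^sup>2 / r2\<^sup>2 \<le> 1" using x ab assms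
        by (auto simp: field_simps intro!: power_mono)
      then have "min 1 (x\<^sup>2 / r1\<^sup>2) - min 1 (x\<^sup>2 / r2\<^sup>2) = x\<^sup>2 * (1/r1\<^sup>2 - 1/r2\<^sup>2)"
        by (simp add: min_def algebra_simps)
      also have "\<dots> \<ge> c" unfolding c_def using x ab \<open>1/r2\<^sup>2 < 1/r1\<^sup>2\<close>
        by (intro mult_right_mono power_mono) auto
      finally have "c * \<nu> b \<le> (min 1 (x\<^sup>2 / r1\<^sup>2) - min 1 (x\<^sup>2 / r2\<^sup>2)) * \<nu> x"
        using nx c0 nb by (intro mult_mono) auto
      then show ?thesis using True by simp
    qed
  qed
  also have "\<dots> = hfun \<nu> r1 - hfun \<nu> r2"
    unfolding hfun_def using int_h[of r1] int_h[of r2] by (simp add: left_diff_distrib)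
  finally have "c * \<nu> b * (b - a) \<le> hfun \<nu> r1 - hfun \<nu> r2" .
  moreover have "0 < c * \<nu> b * (b - a)" using c0 nb ab by simp
  ultimately show ?thesis by linarith
qed

lemma h1_pos: "0 < hfun \<nu> 1"
  using h_strict[of 1 2] h_nonneg[of 2] by simp

lemma h_exists: assumes s: "0 < s" shows "\<exists>r>0. hfun \<nu> r = s"
proof -
  define C where "C = 15 / Cl\<^sup>2"
  have C0: "0 < C" using Cl by (simp add: C_def)
  define y where "y = hfun \<nu> 1 / (C * s)"
  have y0: "0 < y" using h1_pos C0 s by (simp add: y_def)
  define r where "r = min 1 (y powr (1/\<alpha>))"
  have r0: "0 < r" "r \<le> 1" using y0 by (auto simp: r_def)
  have "r powr \<alpha> \<le> (y powr (1/\<alpha>)) powr \<alpha>"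
    using r0 al by (intro powr_mono2) (auto simp: r_def)
  also have "\<dots> = y" using al y0 by (simp add: powr_powr)
  finally have ry: "r powr \<alpha> \<le> y" .
  have "hfun \<nu> 1 \<le> C * (r/1) powr \<alpha> * hfun \<nu> r"
    unfolding C_def by (rule h_scaling[OF Cl lower _ r0(1)]) (use al r0 in auto)
  also have "\<dots> \<le> C * y * hfun \<nu> r"
    using ry C0 h_nonneg[of r] by (intro mult_right_mono mult_left_mono) auto
  also have "\<dots> = hfun \<nu> 1 / s * hfun \<nu> r" using C0 s by (simp add: y_def field_simps)
  finally have "hfun \<nu> 1 \<le> hfun \<nu> 1 / s * hfun \<nu> r" .
  then have "hfun \<nu> 1 * s \<le> hfun \<nu> 1 * hfun \<nu> r" using s by (simp add: field_simps)
  then have lo: "s \<le> hfun \<nu> r" using h1_pos by (simp add: mult_le_cancel_left_pos)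
  define z where "z = C * hfun \<nu> 1 / s"
  have z0: "0 < z" using h1_pos C0 s by (simp add: z_def)
  define x where "x = max 1 (z powr (1/\<alpha>))"
  have x1: "1 \<le> x" by (simp add: x_def)
  have "z = (z powr (1/\<alpha>)) powr \<alpha>" using al z0 by (simp add: powr_powr)
  also have "\<dots> \<le> x powr \<alpha>" using al by (intro powr_mono2) (auto simp: x_def)
  finally have zx: "z \<le> x powr \<alpha>" .
  have "hfun \<nu> x \<le> C * (1/x) powr \<alpha> * hfun \<nu> 1"
    unfolding C_def by (rule h_scaling[OF Cl lower _ _ x1]) (use al in auto)
  also have "\<dots> = C * hfun \<nu> 1 / x powr \<alpha>" using x1 by (simp add: powr_divide)
  also have "\<dots> \<le> C * hfun \<nu> 1 / z" using zx z0 C0 h1_pos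
    by (intro divide_left_mono) (auto intro!: mult_pos_pos)
  also have "\<dots> = s" using z0 s C0 h1_pos by (simp add: z_def)
  finally have hi: "hfun \<nu> x \<le> s" .
  have "continuous_on {r..x} (hfun \<nu>)"
    using r0 by (intro continuous_at_imp_continuous_on ballI h_cont_at) auto
  then obtain q where "r \<le> q" "q \<le> x" "hfun \<nu> q = s"
    using IVT2'[of "hfun \<nu>" x s r] lo hi r0 x1 by auto
  then show ?thesis using r0 by (intro exI[of _ q]) auto
qed

lemma hinv: assumes "0 < s" shows "0 < hinv \<nu> s" "hfun \<nu> (hinv \<nu> s) = s"
proof -
  have ex1: "\<exists>!r. 0 < r \<and> hfun \<nu> r = s"
  proof -
    obtain r where r: "0 < r" "hfun \<nu> r = s" using h_exists[OF assms] by auto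
    moreover have "q = r" if "0 < q" "hfun \<nu> q = s" for q
      using h_strict[of q r] h_strict[of r q] that r by (cases q r rule: linorder_cases) auto
    ultimately show ?thesis by blast
  qed
  from theI'[OF ex1] show "0 < hinv \<nu> s" "hfun \<nu> (hinv \<nu> s) = s"
    unfolding hinv_def by auto
qed

lemma part1:
  fixes d :: nat and \<beta> \<tau> \<epsilon> :: real
  assumes p: "0 \<le> (real d + \<beta> - 1) / \<alpha>" and tau: "0 < \<tau>" and eps: "0 < \<epsilon>"
  shows "\<exists>c. \<forall>t. 0 < t \<and> t \<le> \<tau> \<longrightarrow>
            (\<integral>\<^sup>+ x. ennreal (gtilde \<nu> d \<alpha> \<beta> \<tau> \<epsilon> t x) \<partial>lborel) \<le> ennreal c"
proof -
  define p where "p = (real d + \<beta> - 1) / \<alpha>"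
  define K where "K = min (1 / hinv \<nu> (1 / \<tau>)) (\<tau> * hfun \<nu> \<epsilon> / \<epsilon>) * exp \<epsilon> / \<tau> powr p"
  define Kp where "Kp = \<bar>K\<bar> * \<tau> powr p"
  define C where "C = 15 / Cl\<^sup>2"
  have C0: "0 < C" using Cl by (simp add: C_def)
  have Kp0: "0 \<le> Kp" by (simp add: Kp_def)
  have "(\<integral>\<^sup>+ x. ennreal (gtilde \<nu> d \<alpha> \<beta> \<tau> \<epsilon> t x) \<partial>lborel) \<le> ennreal (2 * (1 + C / \<alpha> + Kp))"
    if t: "0 < t" "t \<le> \<tau>" for t
  proof -
    define R where "R = hinv \<nu> (1/t)"
    have R0: "0 < R" and hR: "hfun \<nu> R = 1/t" using hinv[of "1/t"] t by (auto simp: R_def)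
    define \<phi> where "\<phi> y = indicator {..<R} y * (1/R) + indicator {R..} y * (C * R powr \<alpha> * y powr (-1-\<alpha>)) + Kp * exp (-y)" for y
    have phi_nn: "0 \<le> \<phi> y" for y using R0 C0 Kp0 by (simp add: \<phi>_def)
    have pw: "gtilde \<nu> d \<alpha> \<beta> \<tau> \<epsilon> t x \<le> \<phi> \<bar>x\<bar>" for x
    proof -
      define y where "y = \<bar>x\<bar>"
      have y0: "0 \<le> y" by (simp add: y_def)
      have g_eq: "gtilde \<nu> d \<alpha> \<beta> \<tau> \<epsilon> t x = (if y < \<epsilon> then (if x = 0 then 1/R else min (1/R) (t * hfun \<nu> y / y))
           else K * t powr p * exp (-y))"
        by (simp add: gtilde_def R_def K_def p_def y_def)
      have T1: "0 \<le> indicator {..<R} y * (1/R)" using R0 by simp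
      have T2: "0 \<le> indicator {R..} y * (C * R powr \<alpha> * y powr (-1-\<alpha>))" using C0 by simp
      have T3: "0 \<le> Kp * exp (-y)" using Kp0 by simp
      have phi_y: "\<phi> \<bar>x\<bar> = indicator {..<R} y * (1/R) + indicator {R..} y * (C * R powr \<alpha> * y powr (-1-\<alpha>)) + Kp * exp (-y)"
        by (simp add: \<phi>_def y_def)
      show ?thesis
      proof (cases "y < \<epsilon>")
        case False
        have "K * t powr p * exp (-y) \<le> \<bar>K\<bar> * t powr p * exp (-y)"
          by (intro mult_right_mono) auto
        also have "\<dots> \<le> Kp * exp (-y)" unfolding Kp_def
          using t p by (intro mult_right_mono mult_left_mono powr_mono2) (auto simp: p_def)
        finally have "K * t powr p * exp (-y) \<le> Kp * exp (-y)" .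
        then have "gtilde \<nu> d \<alpha> \<beta> \<tau> \<epsilon> t x \<le> Kp * exp (-y)" using g_eq False by simp
        then show ?thesis using T1 T2 phi_y by linarith
      next
        case True
        show ?thesis
        proof (cases "y < R")
          case True2: True
          have "gtilde \<nu> d \<alpha> \<beta> \<tau> \<epsilon> t x \<le> 1/R" using g_eq True by auto
          also have "1/R = indicator {..<R} y * (1/R)" using True2 by simp
          finally show ?thesis using T2 T3 phi_y by linarith
        next
          case False2: False
          then have yR: "R \<le> y" by simp
          then have yp: "0 < y" using R0 by simp
          then have x0: "x \<noteq> 0" by (auto simp: y_def)
          have "gtilde \<nu> d \<alpha> \<beta> \<tau> \<epsilon> t x \<le> t * hfun \<nu> y / y" using g_eq True x0 by auto
          also have "\<dots> \<le> t * (C * (R/y) powr \<alpha> * hfun \<nu> R) / y"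
            unfolding C_def using t yp
            by (intro divide_right_mono mult_left_mono h_scaling[OF Cl lower _ R0 yR]) (use al in auto)
          also have "\<dots> = C * R powr \<alpha> * y powr (-1-\<alpha>)"
            using t yp R0 hR by (simp add: powr_divide powr_diff powr_minus field_simps)
          also have "\<dots> = indicator {R..} y * (C * R powr \<alpha> * y powr (-1-\<alpha>))" using yR by simp
          finally show ?thesis using T1 T3 phi_y by linarith
        qed
      qed
    qed
    have "(\<integral>\<^sup>+ x. ennreal (gtilde \<nu> d \<alpha> \<beta> \<tau> \<epsilon> t x) \<partial>lborel) \<le> (\<integral>\<^sup>+ x. ennreal (\<phi> \<bar>x\<bar>) \<partial>lborel)"
      by (intro nn_integral_mono ennreal_leI pw)
    also have "\<dots> \<le> 2 * (\<integral>\<^sup>+ y. ennreal (\<phi> y) * indicator {0..} y \<partial>lborel)"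
      by (rule nn_abs[of "\<lambda>y. ennreal (\<phi> y)"]) (simp add: \<phi>_def)
    also have "(\<integral>\<^sup>+ y. ennreal (\<phi> y) * indicator {0..} y \<partial>lborel) \<le>
       (\<integral>\<^sup>+ y. ennreal (1/R) * indicator {0..R} y + ennreal (C * R powr \<alpha> * y powr (-1-\<alpha>)) * indicator {R..} y
           + ennreal (Kp * exp (-y)) * indicator {0..} y \<partial>lborel)"
    proof (rule nn_integral_mono)
      fix y
      show "ennreal (\<phi> y) * indicator {0..} y \<le> ennreal (1/R) * indicator {0..R} y + ennreal (C * R powr \<alpha> * y powr (-1-\<alpha>)) * indicator {R..} y
           + ennreal (Kp * exp (-y)) * indicator {0..} y"
      proof (cases "0 \<le> y")
        case False then show ?thesis by simp
      next
        case True
        have "\<phi> y = indicator {..<R} y * (1/R) + indicator {R..} y * (C * R powr \<alpha> * y powr (-1-\<alpha>)) + Kp * exp (-y)"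
          by (simp add: \<phi>_def)
        then have "ennreal (\<phi> y) = ennreal (indicator {..<R} y * (1/R)) + ennreal (indicator {R..} y * (C * R powr \<alpha> * y powr (-1-\<alpha>))) + ennreal (Kp * exp (-y))"
          using R0 C0 Kp0 by (simp add: ennreal_plus[symmetric] del: ennreal_plus)
        also have "\<dots> \<le> ennreal (1/R) * indicator {0..R} y + ennreal (C * R powr \<alpha> * y powr (-1-\<alpha>)) * indicator {R..} y
           + ennreal (Kp * exp (-y)) * indicator {0..} y"
          using True by (intro add_mono) (auto simp: indicator_def)
        finally show ?thesis using True by simp
      qed
    qed
    also have "\<dots> = ennreal (1/R) * R + ennreal (C * R powr \<alpha> * R powr (-\<alpha>) / \<alpha>) + ennreal Kp"
      using R0 C0 Kp0 al
      by (subst nn_integral_add, measurable, subst nn_integral_add, measurable) 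
         (simp add: int_pow int_exp nn_integral_cmult_indicator)
    also have "\<dots> = ennreal (1 + C / \<alpha> + Kp)"
    proof -
      have e1: "C * R powr \<alpha> * R powr (-\<alpha>) / \<alpha> = C / \<alpha>" using R0 by (simp add: powr_minus)
      have e2: "ennreal (1/R) * R = 1" using R0 by (simp add: ennreal_mult'[symmetric])
      have "ennreal (1 + C / \<alpha> + Kp) = ennreal (1 + C / \<alpha>) + ennreal Kp"
        using C0 Kp0 al by (intro ennreal_plus) auto
      also have "ennreal (1 + C / \<alpha>) = 1 + ennreal (C / \<alpha>)"
        using C0 al by (subst ennreal_plus) auto
      finally show ?thesis unfolding e1 e2 by simp
    qed
    finally have "(\<integral>\<^sup>+ x. ennreal (gtilde \<nu> d \<alpha> \<beta> \<tau> \<epsilon> t x) \<partial>lborel) \<le> 2 * ennreal (1 + C / \<alpha> + Kp)"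
      by (simp add: mult_left_mono)
    also have "2 * ennreal (1 + C / \<alpha> + Kp) = ennreal (2 * (1 + C / \<alpha> + Kp))"
      by (subst ennreal_mult) (use C0 Kp0 al in auto)
    finally show ?thesis .
  qed
  then show ?thesis by blast
qed

lemma part2:
  fixes d :: nat and \<beta> \<tau> \<epsilon> a :: real
  assumes p: "0 < (real d + \<beta> - 1) / \<alpha>" and eps: "0 < \<epsilon>" and a: "0 < a"
  shows "((\<lambda>t. \<integral>\<^sup>+ x\<in>{x. a < \<bar>x\<bar>}. ennreal (gtilde \<nu> d \<alpha> \<beta> \<tau> \<epsilon> t x) \<partial>lborel) \<longlongrightarrow> 0) (at_right 0)"
proof -
  define p where "p = (real d + \<beta> - 1) / \<alpha>"
  define K where "K = min (1 / hinv \<nu> (1 / \<tau>)) (\<tau> * hfun \<nu> \<epsilon> / \<epsilon>) * exp \<epsilon> / \<tau> powr p"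
  define ha where "ha = hfun \<nu> a / a"
  have ha0: "0 \<le> ha" using h_nonneg[of a] a by (simp add: ha_def)
  define B where "B t = ennreal (2 * (t * ha * \<epsilon> + \<bar>K\<bar> * t powr p))" for t
  have bound: "(\<integral>\<^sup>+ x\<in>{x. a < \<bar>x\<bar>}. ennreal (gtilde \<nu> d \<alpha> \<beta> \<tau> \<epsilon> t x) \<partial>lborel) \<le> B t"
    if t: "0 < t" for t
  proof -
    define c1 where "c1 = t * ha"
    define c2 where "c2 = \<bar>K\<bar> * t powr p"
    have c10: "0 \<le> c1" using t ha0 by (simp add: c1_def)
    have c20: "0 \<le> c2" by (simp add: c2_def)
    define ch where "ch y = c1 * indicator {..\<epsilon>} y + c2 * exp (-y)" for y
    have pw: "ennreal (gtilde \<nu> d \<alpha> \<beta> \<tau> \<epsilon> t x) * indicator {x. a < \<bar>x\<bar>} x \<le> ennreal (ch \<bar>x\<bar>)" for x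
    proof (cases "a < \<bar>x\<bar>")
      case False then show ?thesis by simp
    next
      case True
      define y where "y = \<bar>x\<bar>"
      have ay: "a < y" using True by (simp add: y_def)
      have g_eq: "gtilde \<nu> d \<alpha> \<beta> \<tau> \<epsilon> t x = (if y < \<epsilon> then (if x = 0 then 1 / hinv \<nu> (1 / t) else min (1 / hinv \<nu> (1 / t)) (t * hfun \<nu> y / y))
           else K * t powr p * exp (-y))"
        by (simp add: gtilde_def K_def p_def y_def)
      have T1: "0 \<le> c1 * indicator {..\<epsilon>} y" using c10 by simp
      have T2: "0 \<le> c2 * exp (-y)" using c20 by simp
      have chi_y: "ch \<bar>x\<bar> = c1 * indicator {..\<epsilon>} y + c2 * exp (-y)" by (simp add: ch_def y_def)
      have "gtilde \<nu> d \<alpha> \<beta> \<tau> \<epsilon> t x \<le> ch \<bar>x\<bar>"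
      proof (cases "y < \<epsilon>")
        case True
        have x0: "x \<noteq> 0" using ay a by (auto simp: y_def)
        have "gtilde \<nu> d \<alpha> \<beta> \<tau> \<epsilon> t x \<le> t * hfun \<nu> y / y" using g_eq True x0 by auto
        also have "\<dots> \<le> t * hfun \<nu> a / y"
          using h_strict[OF a ay] t ay a by (intro divide_right_mono mult_left_mono) auto
        also have "\<dots> \<le> t * hfun \<nu> a / a"
          using t a ay h_nonneg[of a] by (intro divide_left_mono) auto
        also have "\<dots> = c1 * indicator {..\<epsilon>} y" using True by (simp add: c1_def ha_def)
        finally show ?thesis using T2 chi_y by linarith
      next
        case False
        have "K * t powr p * exp (-y) \<le> c2 * exp (-y)" unfolding c2_def
          by (intro mult_right_mono) auto
        then have "gtilde \<nu> d \<alpha> \<beta> \<tau> \<epsilon> t x \<le> c2 * exp (-y)" using g_eq False by simp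
        then show ?thesis using T1 chi_y by linarith
      qed
      then show ?thesis using True by (simp add: ennreal_leI)
    qed
    have "(\<integral>\<^sup>+ x\<in>{x. a < \<bar>x\<bar>}. ennreal (gtilde \<nu> d \<alpha> \<beta> \<tau> \<epsilon> t x) \<partial>lborel) \<le> (\<integral>\<^sup>+ x. ennreal (ch \<bar>x\<bar>) \<partial>lborel)"
      by (intro nn_integral_mono pw)
    also have "\<dots> \<le> 2 * (\<integral>\<^sup>+ y. ennreal (ch y) * indicator {0..} y \<partial>lborel)"
      by (rule nn_abs[of "\<lambda>y. ennreal (ch y)"]) (simp add: ch_def)
    also have "(\<integral>\<^sup>+ y. ennreal (ch y) * indicator {0..} y \<partial>lborel) \<le>
       (\<integral>\<^sup>+ y. ennreal c1 * indicator {0..\<epsilon>} y + ennreal (c2 * exp (-y)) * indicator {0..} y \<partial>lborel)"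
    proof (rule nn_integral_mono)
      fix y
      show "ennreal (ch y) * indicator {0..} y \<le> ennreal c1 * indicator {0..\<epsilon>} y + ennreal (c2 * exp (-y)) * indicator {0..} y"
      proof (cases "0 \<le> y")
        case False then show ?thesis by simp
      next
        case True
        have "ennreal (ch y) = ennreal (c1 * indicator {..\<epsilon>} y) + ennreal (c2 * exp (-y))"
          using c10 c20 by (simp add: ch_def ennreal_plus[symmetric] del: ennreal_plus)
        also have "\<dots> \<le> ennreal c1 * indicator {0..\<epsilon>} y + ennreal (c2 * exp (-y)) * indicator {0..} y"
          using True by (intro add_mono) (auto simp: indicator_def)
        finally show ?thesis using True by simp
      qed
    qed
    also have "\<dots> = ennreal c1 * \<epsilon> + ennreal c2"
      using eps c10 c20
      by (subst nn_integral_add, measurable) (simp add: int_exp nn_integral_cmult_indicator)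
    also have "\<dots> = ennreal (c1 * \<epsilon> + c2)"
      using eps c10 c20 by (simp add: ennreal_plus ennreal_mult)
    finally have "(\<integral>\<^sup>+ x\<in>{x. a < \<bar>x\<bar>}. ennreal (gtilde \<nu> d \<alpha> \<beta> \<tau> \<epsilon> t x) \<partial>lborel) \<le> 2 * ennreal (c1 * \<epsilon> + c2)"
      by (simp add: mult_left_mono)
    also have "2 * ennreal (c1 * \<epsilon> + c2) = B t"
    proof -
      have "0 \<le> c1 * \<epsilon> + c2" using eps c10 c20 by simp
      then have "2 * ennreal (c1 * \<epsilon> + c2) = ennreal (2 * (c1 * \<epsilon> + c2))"
        by (subst ennreal_mult) auto
      then show ?thesis unfolding B_def c1_def c2_def by (simp add: mult.assoc)
    qed
    finally show ?thesis .
  qed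
  have "(B \<longlongrightarrow> ennreal (2 * (0 * ha * \<epsilon> + \<bar>K\<bar> * 0))) (at_right 0)"
    unfolding B_def
    using p by (intro tendsto_ennrealI tendsto_intros tendsto_zero_powrI[of "\<lambda>t. t"])
      (auto simp: p_def intro: eventually_at_rightI[of 0 1] tendsto_ident_at)
  then have B0: "(B \<longlongrightarrow> 0) (at_right 0)" by simp
  show ?thesis
  proof (rule tendsto_sandwich[OF _ _ tendsto_const B0])
    show "\<forall>\<^sub>F t in at_right 0. 0 \<le> (\<integral>\<^sup>+ x\<in>{x. a < \<bar>x\<bar>}. ennreal (gtilde \<nu> d \<alpha> \<beta> \<tau> \<epsilon> t x) \<partial>lborel)"
      by simp
    show "\<forall>\<^sub>F t in at_right 0. (\<integral>\<^sup>+ x\<in>{x. a < \<bar>x\<bar>}. ennreal (gtilde \<nu> d \<alpha> \<beta> \<tau> \<epsilon> t x) \<partial>lborel) \<le> B t"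
      using eventually_at_right_less[of "0::real"] by eventually_elim (rule bound)
  qed
qed

end

theorem corollary2p7:
  fixes \<nu> :: "real \<Rightarrow> real" and \<eta>4 \<alpha> \<beta> Cl Cu \<epsilon> \<tau> :: real and d :: nat
  assumes levy: "levy_density \<nu>"
    and eta: "0 < \<eta>4"
    and C1: "\<exists>\<nu>'. continuous_on {0<..<\<eta>4} \<nu>' \<and>
               (\<forall>x\<in>{0<..<\<eta>4}. (\<nu> has_real_derivative \<nu>' x) (at x) \<and> \<nu>' x < 0) \<and>
               (\<forall>x\<in>{0<..<\<eta>4}. \<forall>y\<in>{0<..<\<eta>4}. x \<le> y \<longrightarrow> - \<nu>' y / y \<le> - \<nu>' x / x)"
    and ab: "0 < \<alpha>" "\<alpha> \<le> \<beta>" "\<beta> < 2"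
    and Cpos: "0 < Cl" "0 < Cu"
    and lower: "\<And>lam \<theta>. 1 \<le> lam \<Longrightarrow> 0 \<le> \<theta> \<Longrightarrow> psi \<nu> (lam * \<theta>) \<ge> Cl * lam powr \<alpha> * psi \<nu> \<theta>"
    and upper: "\<And>lam \<theta>. 1 \<le> lam \<Longrightarrow> 1 \<le> \<theta> \<Longrightarrow> psi \<nu> (lam * \<theta>) \<le> Cu * lam powr \<beta> * psi \<nu> \<theta>"
    and d: "2 \<le> d"
    and eps: "0 < \<epsilon>" "\<epsilon> \<le> 1"
    and tau: "0 < \<tau>"
  shows "(\<exists>c. \<forall>t. 0 < t \<and> t \<le> \<tau> \<longrightarrow>
            (\<integral>\<^sup>+ x. ennreal (gtilde \<nu> d \<alpha> \<beta> \<tau> \<epsilon> t x) \<partial>lborel) \<le> ennreal c)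
       \<and> (\<forall>a>0. ((\<lambda>t. \<integral>\<^sup>+ x\<in>{x. a < \<bar>x\<bar>}. ennreal (gtilde \<nu> d \<alpha> \<beta> \<tau> \<epsilon> t x) \<partial>lborel)
                   \<longlongrightarrow> 0) (at_right 0))"
  proof -
  have meas: "\<nu> \<in> borel_measurable borel" and nn: "\<And>x. 0 \<le> \<nu> x"
    and intI: "integrable lborel (\<lambda>x. min (x\<^sup>2) 1 * \<nu> x)"
    using levy unfolding levy_density_def by auto
  interpret L \<nu> using meas nn intI by unfold_locales auto
  obtain \<nu>' where nd: "\<forall>x\<in>{0<..<\<eta>4}. (\<nu> has_real_derivative \<nu>' x) (at x) \<and> \<nu>' x < 0"
    using C1 by blast
  have dec: "\<nu> y < \<nu> x" if "0 < x" "x < y" "y < \<eta>4" for x y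
  proof (rule DERIV_neg_imp_decreasing[OF \<open>x < y\<close>])
    fix z assume "x \<le> z" "z \<le> y"
    then have "z \<in> {0<..<\<eta>4}" using that by auto
    then show "\<exists>D. (\<nu> has_real_derivative D) (at z) \<and> D < 0" using nd by blast
  qed
  interpret L2 \<nu> Cl \<alpha> \<eta>4
    by unfold_locales (use Cpos ab lower eta dec in auto)
  have p: "0 < (real d + \<beta> - 1) / \<alpha>" using ab d by (intro divide_pos_pos) auto
  show ?thesis
    using part1[of d \<beta> \<tau> \<epsilon>] part2[of d \<beta> \<epsilon>] p tau eps by auto
qed

end
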